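(* Let $\mathcal{D}=\mathcal{P}_{\mathcal{D}}\cup\mathcal{L}_{\mathcal{D}}$ be a dominating set of the incidence graph of an arbitrary projective plane $\Pi_q$ of order $q$, and let $c$ be the maximum, over all points $P$, of $|[P]\cap\mathcal{L}_{\mathcal{D}}|$. Suppose that $|\mathcal{L}_{\mathcal{D}}|+2-q\leq c\leq q-1$. Then $|\mathcal{L}_{\mathcal{D}}|\geq 4q-2-|\mathcal{D}|$.
   Context: A dominating set $\mathcal{D}=\mathcal{P}_{\mathcal{D}}\cup\mathcal{L}_{\mathcal{D}}$ of the incidence graph of $\Pi_q$ is a set of points $\mathcal{P}_{\mathcal{D}}$ and lines $\mathcal{L}_{\mathcal{D}}$ such that every point not in $\mathcal{P}_{\mathcal{D}}$ lies on a line of $\mathcal{L}_{\mathcal{D}}$ and every line not in $\mathcal{L}_{\mathcal{D}}$ contains a point of $\mathcal{P}_{\mathcal{D}}$. $[P]$ is the set of lines through $P$. *)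

theory Defs
  imports Main
begin

definition projective_plane ::
  "'p set \<Rightarrow> 'l set \<Rightarrow> ('p \<Rightarrow> 'l \<Rightarrow> bool) \<Rightarrow> nat \<Rightarrow> bool" where
  "projective_plane Pts Lns inc q \<longleftrightarrow>
     finite Pts \<and> finite Lns \<and>
     (\<forall>P\<in>Pts. \<forall>Q\<in>Pts. P \<noteq> Q \<longrightarrow> (\<exists>!l. l \<in> Lns \<and> inc P l \<and> inc Q l)) \<and>
     (\<forall>l\<in>Lns. \<forall>m\<in>Lns. l \<noteq> m \<longrightarrow> (\<exists>!P. P \<in> Pts \<and> inc P l \<and> inc P m)) \<and>
     (\<exists>A\<in>Pts. \<exists>B\<in>Pts. \<exists>C\<in>Pts. \<exists>D\<in>Pts. distinct [A, B, C, D] \<and>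
        (\<forall>X\<in>{A,B,C,D}. \<forall>Y\<in>{A,B,C,D}. \<forall>Z\<in>{A,B,C,D}. distinct [X, Y, Z] \<longrightarrow>
           \<not> (\<exists>l\<in>Lns. inc X l \<and> inc Y l \<and> inc Z l))) \<and>
     (\<forall>l\<in>Lns. card {P \<in> Pts. inc P l} = q + 1)"

definition pencil :: "'l set \<Rightarrow> ('p \<Rightarrow> 'l \<Rightarrow> bool) \<Rightarrow> 'p \<Rightarrow> 'l set" where
  "pencil Lns inc P = {l \<in> Lns. inc P l}"

definition dominating_set ::
  "'p set \<Rightarrow> 'l set \<Rightarrow> ('p \<Rightarrow> 'l \<Rightarrow> bool) \<Rightarrow> 'p set \<Rightarrow> 'l set \<Rightarrow> bool" where
  "dominating_set Pts Lns inc PD LD \<longleftrightarrow>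
     PD \<subseteq> Pts \<and> LD \<subseteq> Lns \<and>
     (\<forall>P\<in>Pts - PD. \<exists>l\<in>LD. inc P l) \<and>
     (\<forall>l\<in>Lns - LD. \<exists>P\<in>PD. inc P l)"

end

theory Submission
  imports Defs
begin

definition join :: "'l set \<Rightarrow> ('p \<Rightarrow> 'l \<Rightarrow> bool) \<Rightarrow> 'p \<Rightarrow> 'p \<Rightarrow> 'l" where
  "join Lns inc P Q = (THE l. l \<in> Lns \<and> inc P l \<and> inc Q l)"

lemma join_props:
  assumes "projective_plane Pts Lns inc q" "P \<in> Pts" "Q \<in> Pts" "P \<noteq> Q"
  shows "join Lns inc P Q \<in> Lns \<and> inc P (join Lns inc P Q) \<and> inc Q (join Lns inc P Q)"
proof -
  have "\<exists>!l. l \<in> Lns \<and> inc P l \<and> inc Q l" using assms unfolding projective_plane_def by blast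
  then show ?thesis unfolding join_def by (rule theI')
qed

lemma line_uniq:
  assumes "projective_plane Pts Lns inc q" "P \<in> Pts" "Q \<in> Pts" "P \<noteq> Q"
    "l \<in> Lns" "inc P l" "inc Q l" "k \<in> Lns" "inc P k" "inc Q k"
  shows "l = k"
proof -
  have "\<exists>!l. l \<in> Lns \<and> inc P l \<and> inc Q l" using assms unfolding projective_plane_def by blast
  then show ?thesis using assms by blast
qed

lemma line_missing:
  assumes pp: "projective_plane Pts Lns inc q" and P: "P \<in> Pts"
  shows "\<exists>m\<in>Lns. \<not> inc P m"
proof (rule ccontr)
  assume H: "\<not> (\<exists>m\<in>Lns. \<not> inc P m)"
  have ex: "\<exists>A\<in>Pts. \<exists>B\<in>Pts. \<exists>C\<in>Pts. \<exists>D\<in>Pts. distinct [A, B, C, D] \<and>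
        (\<forall>X\<in>{A,B,C,D}. \<forall>Y\<in>{A,B,C,D}. \<forall>Z\<in>{A,B,C,D}. distinct [X, Y, Z] \<longrightarrow>
           \<not> (\<exists>l\<in>Lns. inc X l \<and> inc Y l \<and> inc Z l))"
    using pp unfolding projective_plane_def by (elim conjE) assumption
  obtain A B C D where ABCD: "A\<in>Pts" "B\<in>Pts" "C\<in>Pts" "D\<in>Pts" "distinct [A, B, C, D]"
     and nc: "\<forall>X\<in>{A,B,C,D}. \<forall>Y\<in>{A,B,C,D}. \<forall>Z\<in>{A,B,C,D}. distinct [X, Y, Z] \<longrightarrow>
           \<not> (\<exists>l\<in>Lns. inc X l \<and> inc Y l \<and> inc Z l)"
    using ex by (elim bexE conjE) (rule that, assumption+)
  let ?AB = "join Lns inc A B" and ?AC = "join Lns inc A C" and ?CD = "join Lns inc C D"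
  have AB: "?AB \<in> Lns \<and> inc A ?AB \<and> inc B ?AB" using join_props[OF pp] ABCD by auto
  have AC: "?AC \<in> Lns \<and> inc A ?AC \<and> inc C ?AC" using join_props[OF pp] ABCD by auto
  have CD: "?CD \<in> Lns \<and> inc C ?CD \<and> inc D ?CD" using join_props[OF pp] ABCD by auto
  have "inc P ?AB" "inc P ?AC" "inc P ?CD" using H AB AC CD by auto
  have "?AB \<noteq> ?AC"
  proof
    assume "?AB = ?AC"
    then have "inc C ?AB" using AC by simp
    moreover have "distinct [A,B,C]" using ABCD(5) by auto
    moreover have "A \<in> {A,B,C,D}" "B \<in> {A,B,C,D}" "C \<in> {A,B,C,D}" by simp_all
    ultimately show False using nc[rule_format, of A B C] AB by blast
  qed
  have "P = A"
  proof (rule ccontr)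
    assume "P \<noteq> A"
    then have "?AB = ?AC" using line_uniq[OF pp P, of A ?AB ?AC] AB AC \<open>inc P ?AB\<close> \<open>inc P ?AC\<close> ABCD by auto
    with \<open>?AB \<noteq> ?AC\<close> show False by simp
  qed
  then have "inc A ?CD" using \<open>inc P ?CD\<close> by simp
  moreover have "distinct [A,C,D]" using ABCD(5) by auto
  moreover have "A \<in> {A,B,C,D}" "D \<in> {A,B,C,D}" "C \<in> {A,B,C,D}" by simp_all
  ultimately show False using nc[rule_format, of A C D] CD by blast
qed

lemma pp_basic:
  assumes pp: "projective_plane Pts Lns inc q"
  shows "finite Pts" "finite Lns" "\<And>l. l \<in> Lns \<Longrightarrow> card {P \<in> Pts. inc P l} = q + 1"
    "Pts \<noteq> {}"
proof -
  show "finite Pts" using pp unfolding projective_plane_def by (elim conjE) assumption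
  show "finite Lns" using pp unfolding projective_plane_def by (elim conjE) assumption
  show "\<And>l. l \<in> Lns \<Longrightarrow> card {P \<in> Pts. inc P l} = q + 1"
  proof -
    fix l assume "l \<in> Lns"
    have "\<forall>l\<in>Lns. card {P \<in> Pts. inc P l} = q + 1"
      using pp unfolding projective_plane_def by (elim conjE) assumption
    then show "card {P \<in> Pts. inc P l} = q + 1" using \<open>l \<in> Lns\<close> by blast
  qed
  have ex: "\<exists>A\<in>Pts. \<exists>B\<in>Pts. \<exists>C\<in>Pts. \<exists>D\<in>Pts. distinct [A, B, C, D] \<and>
        (\<forall>X\<in>{A,B,C,D}. \<forall>Y\<in>{A,B,C,D}. \<forall>Z\<in>{A,B,C,D}. distinct [X, Y, Z] \<longrightarrow>
           \<not> (\<exists>l\<in>Lns. inc X l \<and> inc Y l \<and> inc Z l))"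
    using pp unfolding projective_plane_def by (elim conjE) assumption
  then show "Pts \<noteq> {}" by (elim bexE) blast
qed

theorem lemma4:
  fixes Pts :: "'p set" and Lns :: "'l set" and inc :: "'p \<Rightarrow> 'l \<Rightarrow> bool"
    and q :: nat and PD :: "'p set" and LD :: "'l set" and c :: nat
  assumes "projective_plane Pts Lns inc q"
    and "dominating_set Pts Lns inc PD LD"
    and "c = Max ((\<lambda>P. card (pencil Lns inc P \<inter> LD)) ` Pts)"
    and "int (card LD) + 2 - int q \<le> int c"
    and "int c \<le> int q - 1"
  shows "int (card LD) \<ge> 4 * int q - 2 - (int (card PD) + int (card LD))"
proof -
  note pp = assms(1)
  note finP = pp_basic(1)[OF pp] and finL = pp_basic(2)[OF pp]
    and cardl = pp_basic(3)[OF pp] and nonempty = pp_basic(4)[OF pp]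
  have ds: "PD \<subseteq> Pts" "LD \<subseteq> Lns" "\<And>P. P \<in> Pts - PD \<Longrightarrow> \<exists>l\<in>LD. inc P l"
    using assms(2) unfolding dominating_set_def by auto
  have finLD: "finite LD" using ds(2) finL finite_subset by blast
  have finPD: "finite PD" using ds(1) finP finite_subset by blast
  have "c \<in> (\<lambda>P. card (pencil Lns inc P \<inter> LD)) ` Pts"
    unfolding assms(3) using finP nonempty by (intro Max_in) auto
  then obtain P where P: "P \<in> Pts" and cP: "card (pencil Lns inc P \<inter> LD) = c" by auto
  obtain m where m: "m \<in> Lns" "\<not> inc P m" using line_missing[OF pp P] by blast
  define J where "J = join Lns inc P"
  have Jp: "\<And>X. X \<in> Pts \<Longrightarrow> X \<noteq> P \<Longrightarrow> J X \<in> Lns \<and> inc P (J X) \<and> inc X (J X)"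
    unfolding J_def using join_props[OF pp P] by auto
  define M where "M = {X \<in> Pts. inc X m}"
  have finM: "finite M" unfolding M_def using finP by simp
  have cardM: "card M = q + 1" unfolding M_def using cardl m by simp
  have MP: "\<And>X. X \<in> M \<Longrightarrow> X \<noteq> P \<and> X \<in> Pts \<and> inc X m" unfolding M_def using m by auto
  have injJ: "inj_on J M"
  proof (rule inj_onI)
    fix X Y assume XY: "X \<in> M" "Y \<in> M" "J X = J Y"
    show "X = Y"
    proof (rule ccontr)
      assume "X \<noteq> Y"
      have X: "J X \<in> Lns \<and> inc P (J X) \<and> inc X (J X)" using Jp MP XY(1) by blast
      have Y: "J Y \<in> Lns \<and> inc P (J Y) \<and> inc Y (J Y)" using Jp MP XY(2) by blast
      have "J X = m" using line_uniq[OF pp, of X Y "J X" m] X Y XY MP \<open>X \<noteq> Y\<close> m by simp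
      then show False using X m by simp
    qed
  qed
  define S where "S = {X \<in> M. J X \<notin> LD}"
  define S' where "S' = {X \<in> M. J X \<in> LD}"
  have "card S' \<le> card (pencil Lns inc P \<inter> LD)"
  proof (rule card_inj_on_le)
    show "inj_on J S'" using injJ unfolding S'_def by (rule inj_on_subset) auto
    show "J ` S' \<subseteq> pencil Lns inc P \<inter> LD" unfolding S'_def pencil_def using Jp MP by auto
    show "finite (pencil Lns inc P \<inter> LD)" using finLD by simp
  qed
  moreover have "card S + card S' = card M"
  proof -
    have "S \<union> S' = M" "S \<inter> S' = {}" unfolding S_def S'_def by auto
    moreover have "finite S" "finite S'" using finM unfolding S_def S'_def by auto
    ultimately show ?thesis using card_Un_disjoint[of S S'] by simp
  qed
  ultimately have cardS: "int (card S) \<ge> int q + 1 - int c" using cP cardM by linarith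
  have finS: "finite S" unfolding S_def using finM by simp
  define T where "T = (\<lambda>X. {Y \<in> PD. inc Y (J X) \<and> Y \<noteq> P})"
  have cpl: "card (LD - pencil Lns inc P) = card LD - c"
  proof -
    have "LD - pencil Lns inc P = LD - (pencil Lns inc P \<inter> LD)" by auto
    then show ?thesis using card_Diff_subset[of "pencil Lns inc P \<inter> LD" LD] cP finLD by auto
  qed
  have cLDc: "c \<le> card LD" using cP card_mono[OF finLD, of "pencil Lns inc P \<inter> LD"] by auto
  have Tb: "int (card (T X)) \<ge> int q + int c - int (card LD)" if X: "X \<in> S" for X
  proof -
    let ?l = "J X"
    have l: "?l \<in> Lns" "inc P ?l" "inc X ?l" "?l \<notin> LD" using Jp MP X unfolding S_def by auto
    define L where "L = {Y \<in> Pts. inc Y ?l} - {P}"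
    have finL': "finite L" unfolding L_def using finP by simp
    have cL: "card L = q" unfolding L_def using cardl[OF l(1)] P l(2) by simp
    define U where "U = L - PD"
    define f where "f = (\<lambda>Y. SOME k. k \<in> LD \<and> inc Y k)"
    have fp: "f Y \<in> LD \<and> inc Y (f Y)" if "Y \<in> U" for Y
    proof -
      have "\<exists>k. k \<in> LD \<and> inc Y k" using ds(3) that unfolding U_def L_def by auto
      then show ?thesis unfolding f_def by (rule someI_ex)
    qed
    have "card U \<le> card (LD - pencil Lns inc P)"
    proof (rule card_inj_on_le)
      show "inj_on f U"
      proof (rule inj_onI)
        fix Y Z assume YZ: "Y \<in> U" "Z \<in> U" "f Y = f Z"
        show "Y = Z"
        proof (rule ccontr)
          assume "Y \<noteq> Z"
          have "f Y = ?l" using line_uniq[OF pp, of Y Z "f Y" ?l] YZ fp[OF YZ(1)] fp[OF YZ(2)] \<open>Y \<noteq> Z\<close> l ds(2)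
            unfolding U_def L_def by auto
          then show False using fp[OF YZ(1)] l by simp
        qed
      qed
      show "f ` U \<subseteq> LD - pencil Lns inc P"
      proof
        fix k assume "k \<in> f ` U"
        then obtain Y where Y: "Y \<in> U" "k = f Y" by auto
        have "\<not> inc P k"
        proof
          assume "inc P k"
          then have "k = ?l" using line_uniq[OF pp, of P Y k ?l] fp[OF Y(1)] Y l ds(2) P
            unfolding U_def L_def by auto
          then show False using fp[OF Y(1)] Y l by simp
        qed
        then show "k \<in> LD - pencil Lns inc P" using fp[OF Y(1)] Y unfolding pencil_def by auto
      qed
      show "finite (LD - pencil Lns inc P)" using finLD by simp
    qed
    moreover have "L = T X \<union> U" "T X \<inter> U = {}"
      unfolding L_def T_def U_def using ds(1) by auto
    moreover have "finite (T X)" "finite U" using finL' \<open>L = T X \<union> U\<close> by auto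
    ultimately have "card L = card (T X) + card U" using card_Un_disjoint[of "T X" U] by simp
    then show ?thesis using cL cpl cLDc \<open>card U \<le> _\<close> by linarith
  qed
  have "card (\<Union>X\<in>S. T X) = (\<Sum>X\<in>S. card (T X))"
  proof (rule card_UN_disjoint[OF finS])
    show "\<forall>X\<in>S. finite (T X)" unfolding T_def using finPD by simp
    show "\<forall>X\<in>S. \<forall>Y\<in>S. X \<noteq> Y \<longrightarrow> T X \<inter> T Y = {}"
    proof (intro ballI impI)
      fix X Y assume XY: "X \<in> S" "Y \<in> S" "X \<noteq> Y"
      have ne: "J X \<noteq> J Y" using inj_onD[OF injJ, of X Y] XY unfolding S_def by blast
      show "T X \<inter> T Y = {}"
      proof (rule ccontr)
        assume "T X \<inter> T Y \<noteq> {}"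
        then obtain Z where Z: "Z \<in> PD" "inc Z (J X)" "inc Z (J Y)" "Z \<noteq> P" unfolding T_def by auto
        have XM: "X \<in> M" "Y \<in> M" using XY unfolding S_def by auto
        have JX: "J X \<in> Lns \<and> inc P (J X)" using Jp MP XM(1) by blast
        have JY: "J Y \<in> Lns \<and> inc P (J Y)" using Jp MP XM(2) by blast
        have "Z \<in> Pts" using Z ds(1) by blast
        then have "J X = J Y" using line_uniq[OF pp P, of Z "J X" "J Y"] Z JX JY by simp
        with ne show False by simp
      qed
    qed
  qed
  moreover have "(\<Union>X\<in>S. T X) \<subseteq> PD" unfolding T_def by auto
  ultimately have "(\<Sum>X\<in>S. card (T X)) \<le> card PD" using card_mono[OF finPD, of "\<Union>X\<in>S. T X"] by simp
  moreover have "int (\<Sum>X\<in>S. card (T X)) = (\<Sum>X\<in>S. int (card (T X)))" by (rule of_nat_sum)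
  ultimately have sPD: "(\<Sum>X\<in>S. int (card (T X))) \<le> int (card PD)" by linarith
  define b where "b = int q + int c - int (card LD)"
  have "(\<Sum>X\<in>S. b) \<le> (\<Sum>X\<in>S. int (card (T X)))"
  proof (rule sum_mono)
    fix X assume "X \<in> S"
    then show "b \<le> int (card (T X))" using Tb[OF \<open>X \<in> S\<close>] unfolding b_def by linarith
  qed
  then have "int (card S) * b \<le> int (card PD)" using sPD by simp
  moreover have "b \<ge> 2" unfolding b_def using assms(4) by linarith
  moreover have "int (card S) \<ge> 2" using cardS assms(5) by linarith
  ultimately have A: "int (card S) * b \<le> int (card PD)" and B: "b \<ge> 2" and C: "int (card S) \<ge> 2"
    by blast+
  have "0 \<le> (int (card S) - 2) * (b - 2)" using B C by (intro mult_nonneg_nonneg) linarith+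
  also have "\<dots> = int (card S) * b - 2 * int (card S) - 2 * b + 4" by (simp add: algebra_simps)
  finally have "0 \<le> int (card S) * b - 2 * int (card S) - 2 * b + 4" .
  with A have "int (card S) * b - 2 * int (card S) - 2 * b + 4 \<ge> 0" "int (card S) * b \<le> int (card PD)"
    by simp_all
  then show ?thesis using cardS b_def by linarith
qed

end
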